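(* Let $P,N>0$. If $\mathcal{C}$ is a $(P,N,1)$-sphere packing, then it is also a $(P,N',L)$-multiple packing for any $0\le N'<\frac{2(L-1)N}{L}$ and any $L\in\mathbb{Z}_{\ge2}$.
   Context: $\mathcal{B}^n(y,r)$ is the closed Euclidean ball in $\mathbb{R}^n$ of radius $r$ centered at $y$, $\mathcal{B}^n(r)=\mathcal{B}^n(0,r)$. For $P,N>0$ and $K\in\mathbb{Z}_{\ge1}$, a set $\mathcal{C}\subseteq\mathcal{B}^n(\sqrt{nP})$ is a $(P,N,K)$-multiple packing if $|\mathcal{C}\cap\mathcal{B}^n(y,\sqrt{nN})|\le K$ for every $y\in\mathbb{R}^n$; for $K=1$ it is called a $(P,N,1)$-sphere packing. *)

theory Defs
  imports "HOL-Analysis.Analysis"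
begin

text \<open>Vectors in R^n are modelled as real ^ 'n, with n = CARD('n).\<close>

definition multiple_packing :: "real \<Rightarrow> real \<Rightarrow> nat \<Rightarrow> (real ^ 'n) set \<Rightarrow> bool" where
  "multiple_packing P N K C \<longleftrightarrow>
     C \<subseteq> cball 0 (sqrt (real CARD('n) * P)) \<and>
     (\<forall>y :: real ^ 'n. finite (C \<inter> cball y (sqrt (real CARD('n) * N))) \<and>
                        card (C \<inter> cball y (sqrt (real CARD('n) * N))) \<le> K)"

abbreviation sphere_packing :: "real \<Rightarrow> real \<Rightarrow> (real ^ 'n) set \<Rightarrow> bool" where
  "sphere_packing P N C \<equiv> multiple_packing P N 1 C"

end

theory Submission
  imports Defs
begin

lemma sep_lemma:
  fixes C :: "(real ^ 'n) set"
  assumes sp: "multiple_packing P N 1 C" and N: "N \<ge> 0" and x: "x \<in> C" and z: "z \<in> C" and xz: "x \<noteq> z"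
  shows "norm (x - z) ^ 2 > 4 * (real CARD('n) * N)"
proof (rule ccontr)
  define r where "r = sqrt (real CARD('n) * N)"
  have r0: "r \<ge> 0" unfolding r_def using N by simp
  have r2: "r ^ 2 = real CARD('n) * N" unfolding r_def using N by simp
  assume "\<not> ?thesis"
  hence h: "norm (x - z) ^ 2 \<le> (2 * r) ^ 2"
    using r2 by (simp add: power_mult_distrib)
  have "norm (x - z) \<le> 2 * r"
    by (rule power2_le_imp_le[OF h]) (use r0 in simp)
  define m where "m = midpoint x z"
  have d1: "dist m x = norm (x - z) / 2" unfolding m_def dist_midpoint by (simp add: dist_norm)
  have d2: "dist m z = norm (x - z) / 2" unfolding m_def dist_midpoint by (simp add: dist_norm)
  have "x \<in> C \<inter> cball m r" "z \<in> C \<inter> cball m r"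
    using x z d1 d2 \<open>norm (x - z) \<le> 2 * r\<close> by (auto simp: dist_commute)
  moreover have "finite (C \<inter> cball m r)" "card (C \<inter> cball m r) \<le> 1"
    using sp unfolding multiple_packing_def r_def by auto
  ultimately show False using xz card_le_Suc0_iff_eq[of "C \<inter> cball m r"]
    by (simp only: One_nat_def) blast
qed

lemma norm_diff_sq:
  fixes u v :: "real ^ 'n"
  shows "norm (u - v) ^ 2 = norm u ^ 2 + norm v ^ 2 - 2 * (u \<bullet> v)"
  by (simp add: power2_norm_eq_inner inner_diff_left inner_diff_right inner_commute)

lemma pair_identity_gen:
  fixes u :: "'a \<Rightarrow> real ^ 'n"
  assumes "finite S"
  shows "(\<Sum>x\<in>S. \<Sum>z\<in>S. norm (u x - u z) ^ 2)
     = 2 * real (card S) * (\<Sum>x\<in>S. norm (u x) ^ 2) - 2 * norm (\<Sum>x\<in>S. u x) ^ 2"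
proof -
  have "(\<Sum>x\<in>S. \<Sum>z\<in>S. norm (u x - u z) ^ 2)
      = (\<Sum>x\<in>S. \<Sum>z\<in>S. norm (u x) ^ 2 + norm (u z) ^ 2 - 2 * (u x \<bullet> u z))"
    by (intro sum.cong refl) (rule norm_diff_sq)
  also have "\<dots> = (\<Sum>x\<in>S. real (card S) * norm (u x) ^ 2 + (\<Sum>z\<in>S. norm (u z) ^ 2) - 2 * (u x \<bullet> (\<Sum>z\<in>S. u z)))"
    by (simp only: sum.distrib sum_subtractf sum_distrib_left[symmetric] inner_sum_right sum_constant) (simp?)
  also have "\<dots> = real (card S) * (\<Sum>x\<in>S. norm (u x) ^ 2) + real (card S) * (\<Sum>z\<in>S. norm (u z) ^ 2) - 2 * ((\<Sum>x\<in>S. u x) \<bullet> (\<Sum>z\<in>S. u z))"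
    by (simp only: sum.distrib sum_subtractf sum_distrib_left[symmetric] inner_sum_left sum_constant) (simp?)
  also have "\<dots> = 2 * real (card S) * (\<Sum>x\<in>S. norm (u x) ^ 2) - 2 * norm (\<Sum>x\<in>S. u x) ^ 2"
    by (simp add: power2_norm_eq_inner)
  finally show ?thesis .
qed

lemma pair_identity:
  fixes S :: "(real ^ 'n) set"
  assumes "finite S"
  shows "(\<Sum>x\<in>S. \<Sum>z\<in>S. norm (x - z) ^ 2)
     = 2 * real (card S) * (\<Sum>x\<in>S. norm (x - y) ^ 2) - 2 * norm (\<Sum>x\<in>S. (x - y)) ^ 2"
  using pair_identity_gen[OF assms, of "\<lambda>x. x - y"] by simp

lemma le_helper: "(a::real) = b - 2 * c ^ 2 \<Longrightarrow> a \<le> b"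
  using zero_le_power2[of c] by linarith

lemma no_L_points:
  fixes C S :: "(real ^ 'n) set" and y :: "real ^ 'n"
  assumes sp: "multiple_packing P N 1 C" and N: "N > 0"
    and L: "L \<ge> 2" and N'0: "0 \<le> N'" and N': "N' < 2 * (real L - 1) * N / real L"
    and S: "S \<subseteq> C \<inter> cball y (sqrt (real CARD('n) * N'))" and fS: "finite S" and cS: "card S = L"
  shows False
proof -
  define n where "n = real CARD('n)"
  have n0: "n > 0" unfolding n_def by simp
  have Lr: "real L \<ge> 2" using L by simp
  have Sne: "S \<noteq> {}" using cS L by auto
  have sep: "norm (x - z) ^ 2 > 4 * (n * N)" if "x \<in> S" "z \<in> S" "x \<noteq> z" for x z
  proof -
    have "x \<in> C" "z \<in> C" using that S by auto
    then show ?thesis using sep_lemma[OF sp less_imp_le[OF N] _ _ that(3)] unfolding n_def by blast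
  qed
  have inner: "(\<Sum>z\<in>S. norm (x - z) ^ 2) > (real L - 1) * (4 * (n * N))" if x: "x \<in> S" for x
  proof -
    have "(\<Sum>z\<in>S. norm (x - z) ^ 2) = norm (x - x) ^ 2 + (\<Sum>z\<in>S - {x}. norm (x - z) ^ 2)"
      by (rule sum.remove[OF fS x])
    also have "\<dots> = (\<Sum>z\<in>S - {x}. norm (x - z) ^ 2)" by simp
    also have "\<dots> > (\<Sum>z\<in>S - {x}. 4 * (n * N))"
    proof (rule sum_strict_mono)
      show "finite (S - {x})" using fS by simp
      have "card (S - {x}) = L - 1" using cS x fS by simp
      then have "card (S - {x}) \<noteq> 0" using L by linarith
      then show "S - {x} \<noteq> {}" by (metis card.empty)
      show "\<And>z. z \<in> S - {x} \<Longrightarrow> 4 * (n * N) < norm (x - z) ^ 2" using sep x by auto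
    qed
    finally have c1: "(\<Sum>z\<in>S - {x}. 4 * (n * N)) < (\<Sum>z\<in>S. norm (x - z) ^ 2)" .
    have c2: "(\<Sum>z\<in>S - {x}. 4 * (n * N)) = (real L - 1) * (4 * (n * N))"
      using cS x fS L by (simp add: of_nat_diff)
    show ?thesis using c1 unfolding c2 .
  qed
  have lower: "(\<Sum>x\<in>S. \<Sum>z\<in>S. norm (x - z) ^ 2) > real L * ((real L - 1) * (4 * (n * N)))"
  proof -
    have "(\<Sum>x\<in>S. \<Sum>z\<in>S. norm (x - z) ^ 2) > (\<Sum>x\<in>S. (real L - 1) * (4 * (n * N)))"
      by (rule sum_strict_mono[OF fS Sne inner])
    then show ?thesis using cS by simp
  qed
  have rr: "sqrt (n * N') ^ 2 = n * N'" using n0 N'0 by simp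
  have each: "norm (x - y) ^ 2 \<le> n * N'" if "x \<in> S" for x
  proof -
    have "norm (x - y) \<le> sqrt (n * N')" using S that unfolding n_def by (auto simp: dist_norm norm_minus_commute)
    then have "norm (x - y) ^ 2 \<le> sqrt (n * N') ^ 2" by (rule power_mono) simp
    then show ?thesis using rr by simp
  qed
  have pid: "(\<Sum>x\<in>S. \<Sum>z\<in>S. norm (x - z) ^ 2)
     = 2 * real L * (\<Sum>x\<in>S. norm (x - y) ^ 2) - 2 * norm (\<Sum>x\<in>S. (x - y)) ^ 2"
    using pair_identity[OF fS, of y] unfolding cS .
  have "(\<Sum>x\<in>S. \<Sum>z\<in>S. norm (x - z) ^ 2) \<le> 2 * real L * (\<Sum>x\<in>S. norm (x - y) ^ 2)"
    by (rule le_helper[OF pid])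
  also have "\<dots> \<le> 2 * real L * (\<Sum>x\<in>S. n * N')"
  proof (rule mult_left_mono)
    show "(\<Sum>x\<in>S. norm (x - y) ^ 2) \<le> (\<Sum>x\<in>S. n * N')" by (rule sum_mono) (rule each)
    show "0 \<le> 2 * real L" by simp
  qed
  also have "\<dots> = 2 * real L * (real L * (n * N'))" using cS by simp
  finally have up: "(\<Sum>x\<in>S. \<Sum>z\<in>S. norm (x - z) ^ 2) \<le> 2 * real L * (real L * (n * N'))" .
  have "real L * ((real L - 1) * (4 * (n * N))) < 2 * real L * (real L * (n * N'))"
    using less_le_trans[OF lower up] .
  then have "(real L - 1) * (4 * (n * N)) < 2 * (real L * (n * N'))" using Lr by simp
  then have "n * (2 * (real L - 1) * N) < n * (real L * N')" by (simp add: algebra_simps)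
  then have "2 * (real L - 1) * N < real L * N'" using n0 by simp
  moreover have "real L * N' < 2 * (real L - 1) * N" using N' Lr by (simp add: field_simps)
  ultimately show False by linarith
qed

theorem mainTheorem9:
  fixes C :: "(real ^ 'n) set" and P N N' :: real and L :: nat
  assumes "P > 0" and "N > 0"
    and "sphere_packing P N C"
    and "L \<ge> 2"
    and "0 \<le> N'" and "N' < 2 * (real L - 1) * N / real L"
  shows "multiple_packing P N' L C"
proof -
  have fc: "finite A \<and> card A \<le> L" if A_def: "A = C \<inter> cball y (sqrt (real CARD('n) * N'))" for A y
  proof -
    have fA: "finite A"
    proof (rule ccontr)
      assume inf: "infinite A"
      obtain S where S2: "finite S" and S3: "card S = L" and S1: "S \<subseteq> A"
        using infinite_arbitrarily_large[OF inf, of L] by (elim exE conjE)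
      show False by (rule no_L_points[OF assms(3) assms(2) assms(4) assms(5) assms(6) S1[unfolded A_def] S2 S3])
    qed
    have "card A \<le> L"
    proof (rule ccontr)
      assume "\<not> card A \<le> L"
      then have le: "L \<le> card A" by simp
      obtain S where S1: "S \<subseteq> A" and S3: "card S = L"
        using obtain_subset_with_card_n[OF le] by metis
      have S2: "finite S" using S1 fA finite_subset by blast
      show False by (rule no_L_points[OF assms(3) assms(2) assms(4) assms(5) assms(6) S1[unfolded A_def] S2 S3])
    qed
    with fA show ?thesis by blast
  qed
  have "C \<subseteq> cball 0 (sqrt (real CARD('n) * P))"
    using assms(3) unfolding multiple_packing_def by blast
  then show ?thesis unfolding multiple_packing_def using fc by blast
qed

end
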